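(* Let $\mathbb F$ be any field. The problem of classifying pairs $(A,B)$ of commuting $n\times n$ matrices over $\mathbb F$ ($n=1,2,\dots$) up to weak similarity is wild. Moreover, if $\mathbb F$ is not the field with two elements, then the problem of classifying up to weak similarity those pairs $(A,B)$ of commuting matrices over $\mathbb F$ for which $\alpha A+\beta B$ is nonsingular for some $\alpha,\beta\in\mathbb F$ is also wild.
   Context: Two pairs $(A,B)$ and $(A',B')$ of $n\times n$ matrices over $\mathbb F$ are weakly similar if $(A',B')=(S^{-1}(\alpha A+\beta B)S,\;S^{-1}(\gamma A+\delta B)S)$ for some nonsingular $S\in\mathbb F^{n\times n}$ and some nonsingular $\begin{bmatrix}\alpha&\beta\\ \gamma&\delta\end{bmatrix}\in\mathbb F^{2\times 2}$. Two pairs $(M,N)$, $(M',N')$ are similar if $(S^{-1}MS,S^{-1}NS)=(M',N')$ for some nonsingular $S$. A matrix classification problem $\mathcal M$ is given by a set $\mathcal M_1$ of tuples of matrices and a set $\mathcal M_2$ of admissible transformations. It is wild if there is a tuple $M(x,y)=(M_1(x,y),\dots,M_t(x,y))$ of matrices whose entries are noncommutative polynomials in $x,y$ over $\mathbb F$ such that (i) $M(A,B)\in\mathcal M_1$ for all $A,B\in\mathbb F^{n\times n}$, $n\ge 1$ (scalar entries $\alpha$ replaced by $\alpha I_n$), and (ii) $M(A,B)$ is carried to $M(A',B')$ by transformations from $\mathcal M_2$ iff $(A,B)$ and $(A',B')$ are similar. *)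

theory Defs
  imports "Jordan_Normal_Form.Determinant"
begin

text \<open>Noncommutative polynomials in x, y over a field: finitely supported
  coefficient functions on words over the alphabet {x, y}; a word is a
  bool list, True standing for x and False for y.\<close>
type_synonym 'a ncpoly = "bool list \<Rightarrow> 'a"

definition ncpoly :: "'a::zero ncpoly \<Rightarrow> bool" where
  "ncpoly p \<longleftrightarrow> finite {w. p w \<noteq> 0}"

fun word_eval :: "nat \<Rightarrow> 'a::field mat \<Rightarrow> 'a mat \<Rightarrow> bool list \<Rightarrow> 'a mat" where
  "word_eval n A B [] = 1\<^sub>m n"
| "word_eval n A B (b # w) = (if b then A else B) * word_eval n A B w"

definition ncpoly_eval :: "nat \<Rightarrow> 'a::field ncpoly \<Rightarrow> 'a mat \<Rightarrow> 'a mat \<Rightarrow> 'a mat" where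
  "ncpoly_eval n p A B =
     mat n n (\<lambda>(i,j). \<Sum>w\<in>{w. p w \<noteq> 0}. p w * (word_eval n A B w $$ (i,j)))"

text \<open>A matrix of noncommutative polynomials evaluated at (A,B), A,B of size n:
  the block matrix whose (k,l) block is the evaluation of the (k,l) entry.\<close>
definition polymat_eval :: "nat \<Rightarrow> 'a::field ncpoly mat \<Rightarrow> 'a mat \<Rightarrow> 'a mat \<Rightarrow> 'a mat" where
  "polymat_eval n P A B =
     mat (dim_row P * n) (dim_col P * n)
       (\<lambda>(i,j). ncpoly_eval n (P $$ (i div n, j div n)) A B $$ (i mod n, j mod n))"

definition tuple_eval :: "nat \<Rightarrow> 'a::field ncpoly mat list \<Rightarrow> 'a mat \<Rightarrow> 'a mat \<Rightarrow> 'a mat list" where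
  "tuple_eval n Ms A B = map (\<lambda>P. polymat_eval n P A B) Ms"

definition similar_pair :: "'a::field mat \<Rightarrow> 'a mat \<Rightarrow> 'a mat \<Rightarrow> 'a mat \<Rightarrow> bool" where
  "similar_pair M N M' N' \<longleftrightarrow>
     (\<exists>n S Si. M \<in> carrier_mat n n \<and> N \<in> carrier_mat n n \<and> M' \<in> carrier_mat n n \<and>
        N' \<in> carrier_mat n n \<and> S \<in> carrier_mat n n \<and> Si \<in> carrier_mat n n \<and>
        S * Si = 1\<^sub>m n \<and> Si * S = 1\<^sub>m n \<and> Si * M * S = M' \<and> Si * N * S = N')"

definition weakly_similar :: "'a::field mat \<Rightarrow> 'a mat \<Rightarrow> 'a mat \<Rightarrow> 'a mat \<Rightarrow> bool" where
  "weakly_similar A B A' B' \<longleftrightarrow>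
     (\<exists>n S Si \<alpha> \<beta> \<gamma> \<delta>. A \<in> carrier_mat n n \<and> B \<in> carrier_mat n n \<and> A' \<in> carrier_mat n n \<and>
        B' \<in> carrier_mat n n \<and> S \<in> carrier_mat n n \<and> Si \<in> carrier_mat n n \<and>
        S * Si = 1\<^sub>m n \<and> Si * S = 1\<^sub>m n \<and> \<alpha> * \<delta> - \<beta> * \<gamma> \<noteq> 0 \<and>
        A' = Si * (\<alpha> \<cdot>\<^sub>m A + \<beta> \<cdot>\<^sub>m B) * S \<and> B' = Si * (\<gamma> \<cdot>\<^sub>m A + \<delta> \<cdot>\<^sub>m B) * S)"

text \<open>A matrix classification problem: a set M1 of tuples (lists) of matrices and
  the admissible transformations, given as the relation "the first tuple is carried
  to the second by admissible transformations".\<close>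
definition wild :: "'a::field mat list set \<Rightarrow> ('a mat list \<Rightarrow> 'a mat list \<Rightarrow> bool) \<Rightarrow> bool" where
  "wild M1 M2 \<longleftrightarrow>
     (\<exists>Ms :: 'a ncpoly mat list.
        (\<forall>P\<in>set Ms. \<forall>i<dim_row P. \<forall>j<dim_col P. ncpoly (P $$ (i,j))) \<and>
        (\<forall>n A B. n \<ge> 1 \<longrightarrow> A \<in> carrier_mat n n \<longrightarrow> B \<in> carrier_mat n n \<longrightarrow>
            tuple_eval n Ms A B \<in> M1) \<and>
        (\<forall>n n' A B A' B'. n \<ge> 1 \<longrightarrow> n' \<ge> 1 \<longrightarrow>
            A \<in> carrier_mat n n \<longrightarrow> B \<in> carrier_mat n n \<longrightarrow>
            A' \<in> carrier_mat n' n' \<longrightarrow> B' \<in> carrier_mat n' n' \<longrightarrow>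
            (M2 (tuple_eval n Ms A B) (tuple_eval n' Ms A' B') \<longleftrightarrow> similar_pair A B A' B')))"

definition weak_sim_transf :: "'a::field mat list \<Rightarrow> 'a mat list \<Rightarrow> bool" where
  "weak_sim_transf X Y \<longleftrightarrow>
     (\<exists>A B A' B'. X = [A, B] \<and> Y = [A', B'] \<and> weakly_similar A B A' B')"

definition commuting_pairs :: "'a::field mat list set" where
  "commuting_pairs = {[A, B] | A B n. n \<ge> 1 \<and> A \<in> carrier_mat n n \<and> B \<in> carrier_mat n n \<and> A * B = B * A}"

definition commuting_pairs_nonsing :: "'a::field mat list set" where
  "commuting_pairs_nonsing = {[A, B] | A B n. n \<ge> 1 \<and> A \<in> carrier_mat n n \<and> B \<in> carrier_mat n n \<and>
      A * B = B * A \<and> (\<exists>\<alpha> \<beta>. invertible_mat (\<alpha> \<cdot>\<^sub>m A + \<beta> \<cdot>\<^sub>m B))}"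

end

theory Submission imports Defs begin

definition blk :: "nat \<Rightarrow> 'a mat \<Rightarrow> nat \<Rightarrow> nat \<Rightarrow> 'a mat" where
  "blk n M p q = mat n n (\<lambda>(i,j). M $$ (p*n+i, q*n+j))"

lemma blk_carrier[simp]: "blk n M p q \<in> carrier_mat n n"
  by (simp add: blk_def)

lemma blk_dims[simp]: "dim_row (blk n M p q) = n" "dim_col (blk n M p q) = n"
  by (simp_all add: blk_def)

lemma blk_index[simp]: "i < n \<Longrightarrow> j < n \<Longrightarrow> blk n M p q $$ (i,j) = M $$ (p*n+i, q*n+j)"
  by (simp add: blk_def)

lemma sum_blocks: fixes k n :: nat shows "sum f {..<k*n} = (\<Sum>r<k. \<Sum>t<n. f (r*n+t))"
proof (induction k)
  case 0 then show ?case by simp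
next
  case (Suc k)
  have "{..<Suc k * n} = {..<k*n} \<union> {k*n..<k*n+n}" by auto
  then have "sum f {..<Suc k * n} = sum f {..<k*n} + sum f {k*n..<k*n+n}"
    by (simp add: sum.union_disjoint ivl_disj_int)
  also have "sum f {k*n..<k*n+n} = (\<Sum>t<n. f (k*n+t))"
    using sum.shift_bounds_nat_ivl[of f 0 "k*n" n] by (simp add: atLeast0LessThan add.commute)
  finally show ?case using Suc by simp
qed

lemma idx_lt: "p < a \<Longrightarrow> i < (n::nat) \<Longrightarrow> p*n+i < a*n"
proof -
  assume "p < a" "i < n"
  then have "p*n+i < (p+1)*n" by simp
  also have "(p+1)*n \<le> a*n" using \<open>p<a\<close> by (intro mult_le_mono1) simp
  finally show ?thesis .
qed

lemma sum5: "(\<Sum>r<5::nat. g r) = g 0 + g 1 + g 2 + g 3 + g 4"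
  by (simp add: eval_nat_numeral)

lemma blk_prod_index:
  assumes "i < n" "j < n"
  shows "(blk n M p r * blk n N r q) $$ (i,j) = (\<Sum>t<n. M $$ (p*n+i, r*n+t) * N $$ (r*n+t, q*n+j))"
  using assms by (simp add: scalar_prod_def atLeast0LessThan)

lemma blk_rowcol:
  assumes "i < n" "j < n"
  shows "row (blk n M p r) i \<bullet> col (blk n N r q) j = (\<Sum>t<n. M $$ (p*n+i, r*n+t) * N $$ (r*n+t, q*n+j))"
  using assms by (simp add: scalar_prod_def atLeast0LessThan)

lemma blk_mult5:
  assumes M: "M \<in> carrier_mat (a*n) (5*n)" and N: "N \<in> carrier_mat (5*n) (b*n)"
    and p: "p < a" and q: "q < b"
  shows "blk n (M*N) p q = blk n M p 0 * blk n N 0 q + blk n M p 1 * blk n N 1 q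
     + blk n M p 2 * blk n N 2 q + blk n M p 3 * blk n N 3 q + blk n M p 4 * blk n N 4 q"
    (is "_ = ?R")
proof (rule eq_matI)
  fix i j assume "i < dim_row ?R" and "j < dim_col ?R"
  then have i: "i < n" and j: "j < n" by auto
  have r: "p*n+i < a*n" using p i by (rule idx_lt)
  have c: "q*n+j < b*n" using q j by (rule idx_lt)
  have "(M*N) $$ (p*n+i, q*n+j) = (\<Sum>l<5*n. M $$ (p*n+i, l) * N $$ (l, q*n+j))"
    using M N r c by (simp add: scalar_prod_def atLeast0LessThan)
  also have "\<dots> = (\<Sum>r<5. \<Sum>t<n. M $$ (p*n+i, r*n+t) * N $$ (r*n+t, q*n+j))"
    by (rule sum_blocks)
  also have "\<dots> = ?R $$ (i,j)"
    using i j by (simp only: sum5 index_add_mat index_mult_mat blk_dims blk_rowcol mult_0 add_0 mult_1 dim_row_mat dim_col_mat)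
  finally show "blk n (M*N) p q $$ (i,j) = ?R $$ (i,j)" by (simp only: blk_index[OF i j])
qed auto


lemma less5: "(p::nat) < 5 \<Longrightarrow> p = 0 \<or> p = 1 \<or> p = 2 \<or> p = 3 \<or> p = 4"
  by auto

lemma blk_eq:
  assumes M: "M \<in> carrier_mat (a*n) (b*n)" and N: "N \<in> carrier_mat (a*n) (b*n)"
    and eq: "\<And>p q. p < a \<Longrightarrow> q < b \<Longrightarrow> blk n M p q = blk n N p q"
  shows "M = N"
proof (rule eq_matI)
  fix i j assume i: "i < dim_row N" and j: "j < dim_col N"
  then have i': "i < a*n" and j': "j < b*n" using N by auto
  then have np: "0 < n" by (cases n) auto
  have p: "i div n < a" using i' np by (simp add: less_mult_imp_div_less)
  have q: "j div n < b" using j' np by (simp add: less_mult_imp_div_less)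
  have im: "i mod n < n" "j mod n < n" using np by auto
  have "blk n M (i div n) (j div n) $$ (i mod n, j mod n) = blk n N (i div n) (j div n) $$ (i mod n, j mod n)"
    using eq[OF p q] by simp
  then show "M $$ (i,j) = N $$ (i,j)" using im by (simp add: mult.commute[of _ n])
qed (use M N in auto)

lemma blk_eq51:
  assumes M: "M \<in> carrier_mat (5*n) n" and N: "N \<in> carrier_mat (5*n) n"
    and "blk n M 0 0 = blk n N 0 0" "blk n M 1 0 = blk n N 1 0" "blk n M 2 0 = blk n N 2 0"
        "blk n M 3 0 = blk n N 3 0" "blk n M 4 0 = blk n N 4 0"
  shows "M = N"
  by (rule blk_eq[of M 5 n 1 N]) (use assms in \<open>auto dest!: less5\<close>)

lemma blk_eq55:
  assumes M: "M \<in> carrier_mat (5*n) (5*n)" and N: "N \<in> carrier_mat (5*n) (5*n)"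
    and "\<And>q. q < 5 \<Longrightarrow> blk n M 0 q = blk n N 0 q"
        "\<And>q. q < 5 \<Longrightarrow> blk n M 1 q = blk n N 1 q"
        "\<And>q. q < 5 \<Longrightarrow> blk n M 2 q = blk n N 2 q"
        "\<And>q. q < 5 \<Longrightarrow> blk n M 3 q = blk n N 3 q"
        "\<And>q. q < 5 \<Longrightarrow> blk n M 4 q = blk n N 4 q"
  shows "M = N"
  by (rule blk_eq[of M 5 n 5 N]) (use assms in \<open>auto dest!: less5\<close>)

lemma idx_div[simp]: "i < n \<Longrightarrow> (p*n+i) div n = (p::nat)"
  by (simp add: add.commute)

lemma idx_mod[simp]: "i < n \<Longrightarrow> (p*n+i) mod n = (i::nat)"
  by (simp add: add.commute)

lemma idx_inj: "i < n \<Longrightarrow> j < n \<Longrightarrow> (p*n+i = q*n+j) = (p = q \<and> i = (j::nat))"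
  by (metis idx_div idx_mod)

lemma blk_add[simp]: "M \<in> carrier_mat ra ca \<Longrightarrow> N \<in> carrier_mat ra ca \<Longrightarrow> p < a \<Longrightarrow> q < b
  \<Longrightarrow> ra = a*n \<Longrightarrow> ca = b*n \<Longrightarrow> blk n (M + N) p q = blk n M p q + blk n N p q"
  by (rule eq_matI) (auto simp: idx_lt idx_inj)

lemma blk_minus[simp]: "M \<in> carrier_mat ra ca \<Longrightarrow> N \<in> carrier_mat ra ca \<Longrightarrow> p < a \<Longrightarrow> q < b
  \<Longrightarrow> ra = a*n \<Longrightarrow> ca = b*n \<Longrightarrow> blk n (M - N) p q = blk n M p q - blk n N p q"
  by (rule eq_matI) (auto simp: idx_lt idx_inj)

lemma blk_smult[simp]: "M \<in> carrier_mat ra ca \<Longrightarrow> p < a \<Longrightarrow> q < b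
  \<Longrightarrow> ra = a*n \<Longrightarrow> ca = b*n \<Longrightarrow> blk n (c \<cdot>\<^sub>m M) p q = c \<cdot>\<^sub>m blk n M p q"
  by (rule eq_matI) (auto simp: idx_lt idx_inj)

lemma blk_zero[simp]: "p < a \<Longrightarrow> q < b \<Longrightarrow> blk n (0\<^sub>m (a*n) (b*n)) p q = 0\<^sub>m n n"
  by (rule eq_matI) (auto simp: idx_lt idx_inj)

lemma blk_one[simp]: "p < a \<Longrightarrow> q < a \<Longrightarrow> blk n (1\<^sub>m (a*n)) p q = (if p = q then 1\<^sub>m n else 0\<^sub>m n n)"
  by (rule eq_matI) (auto simp: idx_lt idx_inj)

definition Ecol :: "nat \<Rightarrow> nat \<Rightarrow> 'a::field mat" where
  "Ecol n p = mat (5*n) n (\<lambda>(i,j). if i div n = p \<and> i mod n = j then 1 else 0)"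

lemma Ecol_carrier[simp]: "Ecol n p \<in> carrier_mat (5*n) n"
  by (simp add: Ecol_def)

lemma blk_Ecol[simp]: "r < 5 \<Longrightarrow> blk n (Ecol n p) r 0 = (if r = p then 1\<^sub>m n else 0\<^sub>m n n)"
  by (rule eq_matI) (auto simp: Ecol_def idx_lt)


definition pw :: "'a::zero \<Rightarrow> bool list \<Rightarrow> 'a ncpoly" where
  "pw c w0 = (\<lambda>w. if w = w0 then c else 0)"

lemma ncpoly_pw: "ncpoly (pw c w0)"
  unfolding ncpoly_def pw_def
  by (rule finite_subset[of _ "{w0}"]) auto

lemma word_eval_carrier[simp]:
  "X \<in> carrier_mat n n \<Longrightarrow> Y \<in> carrier_mat n n \<Longrightarrow> word_eval n X Y w \<in> carrier_mat n n"
  by (induction w) auto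

lemma smult_one_mat[simp]: "1 \<cdot>\<^sub>m (M :: 'a::field mat) = M"
  by (rule eq_matI) auto

lemma smult_zero_mat[simp]: "0 \<cdot>\<^sub>m (M :: 'a::field mat) = 0\<^sub>m (dim_row M) (dim_col M)"
  by (rule eq_matI) auto

lemma add_zero_right'[simp]: "dim_row (A::'a::field mat) = r \<Longrightarrow> dim_col A = c \<Longrightarrow> A + 0\<^sub>m r c = A"
  by (rule eq_matI) auto

lemma add_zero_left'[simp]: "dim_row (A::'a::field mat) = r \<Longrightarrow> dim_col A = c \<Longrightarrow> 0\<^sub>m r c + A = A"
  by (rule eq_matI) auto

lemma eval_pw:
  assumes X: "X \<in> carrier_mat n n" and Y: "Y \<in> carrier_mat n n"
  shows "ncpoly_eval n (pw (c::'a::field) w0) X Y = c \<cdot>\<^sub>m word_eval n X Y w0"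
proof -
  have W: "word_eval n X Y w0 \<in> carrier_mat n n" using X Y by simp
  show ?thesis
  proof (cases "c = 0")
    case True
    then have S: "{w. pw c w0 w \<noteq> 0} = {}" by (auto simp: pw_def)
    show ?thesis unfolding ncpoly_eval_def S using W True by (intro eq_matI) simp_all
  next
    case False
    then have S: "{w. pw c w0 w \<noteq> 0} = {w0}" by (auto simp: pw_def)
    show ?thesis unfolding ncpoly_eval_def S using W by (intro eq_matI) (simp_all add: pw_def)
  qed
qed

lemma eval_pw_simps[simp]:
  assumes X: "X \<in> carrier_mat n n" and Y: "Y \<in> carrier_mat n n"
  shows "ncpoly_eval n (pw (1::'a::field) []) X Y = 1\<^sub>m n"
    "ncpoly_eval n (pw (0::'a::field) []) X Y = 0\<^sub>m n n"
    "ncpoly_eval n (pw (1::'a::field) [True]) X Y = X"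
    "ncpoly_eval n (pw (1::'a::field) [False]) X Y = Y"
  using X Y by (simp_all add: eval_pw)

definition PA :: "'a::field ncpoly mat" where
  "PA = mat 5 5 (\<lambda>(p,q). if p = q \<or> (p,q) = (1,0) \<or> (p,q) = (3,1) then pw 1 []
      else if (p,q) = (3,2) then pw 1 [False] else pw 0 [])"

definition PB :: "'a::field ncpoly mat" where
  "PB = mat 5 5 (\<lambda>(p,q). if (p,q) = (2,0) \<or> (p,q) = (4,4) then pw 1 []
      else if (p,q) = (3,1) then pw 1 [False] else if (p,q) = (3,2) then pw 1 [True] else pw 0 [])"

lemma PA_dims[simp]: "dim_row PA = 5" "dim_col PA = 5" by (simp_all add: PA_def)
lemma PB_dims[simp]: "dim_row PB = 5" "dim_col PB = 5" by (simp_all add: PB_def)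

definition MA :: "nat \<Rightarrow> 'a::field mat \<Rightarrow> 'a mat \<Rightarrow> 'a mat" where
  "MA n X Y = polymat_eval n PA X Y"
definition MB :: "nat \<Rightarrow> 'a::field mat \<Rightarrow> 'a mat \<Rightarrow> 'a mat" where
  "MB n X Y = polymat_eval n PB X Y"

lemma MA_carrier[simp]: "MA n X Y \<in> carrier_mat (5*n) (5*n)"
  by (simp add: MA_def polymat_eval_def)
lemma MB_carrier[simp]: "MB n X Y \<in> carrier_mat (5*n) (5*n)"
  by (simp add: MB_def polymat_eval_def)

lemma blk_polymat:
  assumes "p < dim_row P" "q < dim_col P"
  shows "blk n (polymat_eval n P X Y) p q = ncpoly_eval n (P $$ (p,q)) X Y"
  by (rule eq_matI) (use assms in \<open>auto simp: polymat_eval_def ncpoly_eval_def idx_lt\<close>)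

lemma blk_MA[simp]:
  assumes X: "X \<in> carrier_mat n n" and Y: "Y \<in> carrier_mat n n" and "p < 5" "q < 5"
  shows "blk n (MA n X Y) p q = (if p = q \<or> (p,q) = (1,0) \<or> (p,q) = (3,1) then 1\<^sub>m n
      else if (p,q) = (3,2) then Y else 0\<^sub>m n n)"
  using assms by (simp add: MA_def blk_polymat PA_def)

lemma blk_MB[simp]:
  assumes X: "X \<in> carrier_mat n n" and Y: "Y \<in> carrier_mat n n" and "p < 5" "q < 5"
  shows "blk n (MB n X Y) p q = (if (p,q) = (2,0) \<or> (p,q) = (4,4) then 1\<^sub>m n
      else if (p,q) = (3,1) then Y else if (p,q) = (3,2) then X else 0\<^sub>m n n)"
  using assms by (simp add: MB_def blk_polymat PB_def)

lemma cancel1: "(A::'a::field mat) \<in> carrier_mat n n \<Longrightarrow> B \<in> carrier_mat n n \<Longrightarrow> A + B = A \<Longrightarrow> B = 0\<^sub>m n n"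
proof (rule eq_matI)
  fix i j assume A: "A \<in> carrier_mat n n" and B: "B \<in> carrier_mat n n" and e: "A + B = A"
    and i: "i < dim_row (0\<^sub>m n n :: 'a mat)" and j: "j < dim_col (0\<^sub>m n n :: 'a mat)"
  have "(A + B) $$ (i,j) = A $$ (i,j)" using e by simp
  then show "B $$ (i,j) = 0\<^sub>m n n $$ (i,j)" using A B i j by simp
qed auto

lemma cancel2:
  assumes A: "(A::'a::field mat) \<in> carrier_mat n n" and B: "B \<in> carrier_mat n n" and C: "C \<in> carrier_mat n n"
    and e: "A + B = C + A"
  shows "B = C"
proof (rule eq_matI)
  fix i j assume i: "i < dim_row C" and j: "j < dim_col C"
  have "(A + B) $$ (i,j) = (C + A) $$ (i,j)" using e by simp
  then show "B $$ (i,j) = C $$ (i,j)" using A B C i j by simp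
qed (use A B C in auto)

lemma core:
  assumes X: "X \<in> carrier_mat n n" and Y: "Y \<in> carrier_mat n n"
    and X': "X' \<in> carrier_mat n n" and Y': "Y' \<in> carrier_mat n n"
    and S: "S \<in> carrier_mat (5*n) (5*n)"
    and hA: "S * MA n X' Y' = MA n X Y * S" and hB: "S * MB n X' Y' = MB n X Y * S"
  shows "blk n S 0 1 = 0\<^sub>m n n \<and> blk n S 0 2 = 0\<^sub>m n n \<and> blk n S 0 3 = 0\<^sub>m n n \<and> blk n S 0 4 = 0\<^sub>m n n
     \<and> blk n S 0 0 * X' = X * blk n S 0 0 \<and> blk n S 0 0 * Y' = Y * blk n S 0 0"
proof -
  have eA: "\<And>p q. p < 5 \<Longrightarrow> q < 5 \<Longrightarrow> blk n (S * MA n X' Y') p q = blk n (MA n X Y * S) p q"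
    using hA by simp
  have eB: "\<And>p q. p < 5 \<Longrightarrow> q < 5 \<Longrightarrow> blk n (S * MB n X' Y') p q = blk n (MB n X Y * S) p q"
    using hB by simp
  note dims = carrier_matD[OF X] carrier_matD[OF Y] carrier_matD[OF X'] carrier_matD[OF Y']
  note m = blk_mult5[OF S MA_carrier] blk_mult5[OF MA_carrier S] blk_mult5[OF S MB_carrier] blk_mult5[OF MB_carrier S]
  have A00: "blk n S 0 0 + blk n S 0 1 = blk n S 0 0" using eA[of 0 0] X Y X' Y' by (simp add: m dims)
  have A01: "blk n S 0 1 + blk n S 0 3 = blk n S 0 1" using eA[of 0 1] X Y X' Y' by (simp add: m dims)
  have B00: "blk n S 0 2 = 0\<^sub>m n n" using eB[of 0 0] X Y X' Y' by (simp add: m dims)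
  have B04: "blk n S 0 4 = 0\<^sub>m n n" using eB[of 0 4] X Y X' Y' by (simp add: m dims)
  have A10: "blk n S 1 0 + blk n S 1 1 = blk n S 0 0 + blk n S 1 0" using eA[of 1 0] X Y X' Y' by (simp add: m dims)
  have B20: "blk n S 2 2 = blk n S 0 0" using eB[of 2 0] X Y X' Y' by (simp add: m dims)
  have B10: "blk n S 1 2 = 0\<^sub>m n n" using eB[of 1 0] X Y X' Y' by (simp add: m dims)
  have A20: "blk n S 2 0 + blk n S 2 1 = blk n S 2 0" using eA[of 2 0] X Y X' Y' by (simp add: m dims)
  have A31: "blk n S 3 1 + blk n S 3 3 = blk n S 1 1 + Y * blk n S 2 1 + blk n S 3 1" using eA[of 3 1] X Y X' Y' by (simp add: m dims)
  have A32: "blk n S 3 2 + blk n S 3 3 * Y' = blk n S 1 2 + Y * blk n S 2 2 + blk n S 3 2" using eA[of 3 2] X Y X' Y' by (simp add: m dims)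
  have B32: "blk n S 3 3 * X' = Y * blk n S 1 2 + X * blk n S 2 2" using eB[of 3 2] X Y X' Y' by (simp add: m dims)
  have c: "\<And>p q. blk n S p q \<in> carrier_mat n n" by simp
  have S01: "blk n S 0 1 = 0\<^sub>m n n" using cancel1[OF c c A00] .
  have S03: "blk n S 0 3 = 0\<^sub>m n n" using A01 unfolding S01 by simp
  have S21: "blk n S 2 1 = 0\<^sub>m n n" using cancel1[OF c c A20] .
  have S11: "blk n S 1 1 = blk n S 0 0" using cancel2[OF c c c A10] .
  have "blk n S 3 1 + blk n S 3 3 = blk n S 0 0 + blk n S 3 1" using A31 unfolding S21 S11 using dims by simp
  then have S33: "blk n S 3 3 = blk n S 0 0" using cancel2[OF c c c] by blast
  have "blk n S 3 2 + blk n S 0 0 * Y' = Y * blk n S 0 0 + blk n S 3 2"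
    using A32 unfolding B10 S33 B20 using dims by simp
  then have eY: "blk n S 0 0 * Y' = Y * blk n S 0 0"
    using cancel2[OF c _ _] Y' Y by (meson mult_carrier_mat c)
  have eX: "blk n S 0 0 * X' = X * blk n S 0 0"
    using B32 unfolding B10 S33 B20 using dims by simp
  show ?thesis using S01 S03 B00 B04 eX eY by simp
qed


lemma fix1: assumes "(M::'a::field mat) \<in> carrier_mat n n" "M = c \<cdot>\<^sub>m M" "c \<noteq> 1" shows "M = 0\<^sub>m n n"
proof (rule eq_matI)
  fix i j assume i: "i < dim_row (0\<^sub>m n n :: 'a mat)" and j: "j < dim_col (0\<^sub>m n n :: 'a mat)"
  have "M $$ (i,j) = (c \<cdot>\<^sub>m M) $$ (i,j)" using assms(2) by simp
  then have "M $$ (i,j) = c * M $$ (i,j)" using assms(1) i j by simp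
  then have "(1 - c) * M $$ (i,j) = 0" by (simp add: algebra_simps)
  then show "M $$ (i,j) = 0\<^sub>m n n $$ (i,j)" using assms(3) i j by simp
qed (use assms in auto)

lemma fix0: assumes "(M::'a::field mat) \<in> carrier_mat n n" "0\<^sub>m n n = c \<cdot>\<^sub>m M" "c \<noteq> 0" shows "M = 0\<^sub>m n n"
proof (rule eq_matI)
  fix i j assume i: "i < dim_row (0\<^sub>m n n :: 'a mat)" and j: "j < dim_col (0\<^sub>m n n :: 'a mat)"
  have "0\<^sub>m n n $$ (i,j) = (c \<cdot>\<^sub>m M) $$ (i,j)" using assms(2) by simp
  then have "c * M $$ (i,j) = 0" using assms(1) i j by simp
  then show "M $$ (i,j) = 0\<^sub>m n n $$ (i,j)" using assms(3) i j by simp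
qed (use assms in auto)

lemma neg0: assumes "(M::'a::field mat) \<in> carrier_mat n n" "0\<^sub>m n n - M = 0\<^sub>m n n" shows "M = 0\<^sub>m n n"
proof (rule eq_matI)
  fix i j assume i: "i < dim_row (0\<^sub>m n n :: 'a mat)" and j: "j < dim_col (0\<^sub>m n n :: 'a mat)"
  have "(0\<^sub>m n n - M) $$ (i,j) = 0\<^sub>m n n $$ (i,j)" using assms(2) by simp
  then show "M $$ (i,j) = 0\<^sub>m n n $$ (i,j)" using assms(1) i j by simp
qed (use assms in auto)

lemma blk_zero51[simp]: "p < 5 \<Longrightarrow> blk n (0\<^sub>m (5*n) n) p 0 = 0\<^sub>m n n"
  by (rule eq_matI) (auto simp: idx_lt)

lemma eig:
  assumes X: "X \<in> carrier_mat n n" and Y: "Y \<in> carrier_mat n n"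
    and V: "V \<in> carrier_mat (5*n) n"
    and hA: "MA n X Y * V = l \<cdot>\<^sub>m V" and hB: "MB n X Y * V = mu \<cdot>\<^sub>m V"
    and nz: "V \<noteq> 0\<^sub>m (5*n) n"
  shows "l = 1 \<and> (mu = 0 \<or> mu = 1)"
proof -
  note dims = carrier_matD[OF X] carrier_matD[OF Y]
  have V1: "V \<in> carrier_mat (5*n) (1*n)" using V by simp
  note m = blk_mult5[OF MA_carrier V1] blk_mult5[OF MB_carrier V1]
  have c: "\<And>p. blk n V p 0 \<in> carrier_mat n n" by simp
  have eA: "\<And>p. p < 5 \<Longrightarrow> blk n (MA n X Y * V) p 0 = l \<cdot>\<^sub>m blk n V p 0"
    unfolding hA by (rule blk_smult[OF V, where a=5 and b=1]) auto
  have eB: "\<And>p. p < 5 \<Longrightarrow> blk n (MB n X Y * V) p 0 = mu \<cdot>\<^sub>m blk n V p 0"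
    unfolding hB by (rule blk_smult[OF V, where a=5 and b=1]) auto
  have A0: "blk n V 0 0 = l \<cdot>\<^sub>m blk n V 0 0" using eA[of 0] X Y by (simp add: m dims)
  have A1: "blk n V 0 0 + blk n V 1 0 = l \<cdot>\<^sub>m blk n V 1 0" using eA[of 1] X Y by (simp add: m dims)
  have A2: "blk n V 2 0 = l \<cdot>\<^sub>m blk n V 2 0" using eA[of 2] X Y by (simp add: m dims)
  have A3: "blk n V 1 0 + Y * blk n V 2 0 + blk n V 3 0 = l \<cdot>\<^sub>m blk n V 3 0" using eA[of 3] X Y by (simp add: m dims)
  have A4: "blk n V 4 0 = l \<cdot>\<^sub>m blk n V 4 0" using eA[of 4] X Y by (simp add: m dims)
  have B0: "0\<^sub>m n n = mu \<cdot>\<^sub>m blk n V 0 0" using eB[of 0] X Y by (simp add: m dims)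
  have B1: "0\<^sub>m n n = mu \<cdot>\<^sub>m blk n V 1 0" using eB[of 1] X Y by (simp add: m dims)
  have B2: "blk n V 0 0 = mu \<cdot>\<^sub>m blk n V 2 0" using eB[of 2] X Y by (simp add: m dims)
  have B3: "Y * blk n V 1 0 + X * blk n V 2 0 = mu \<cdot>\<^sub>m blk n V 3 0" using eB[of 3] X Y by (simp add: m dims)
  have B4: "blk n V 4 0 = mu \<cdot>\<^sub>m blk n V 4 0" using eB[of 4] X Y by (simp add: m dims)
  have zero: "V = 0\<^sub>m (5*n) n" if "blk n V 0 0 = 0\<^sub>m n n" "blk n V 1 0 = 0\<^sub>m n n" "blk n V 2 0 = 0\<^sub>m n n"
      "blk n V 3 0 = 0\<^sub>m n n" "blk n V 4 0 = 0\<^sub>m n n"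
    by (rule blk_eq51[OF V]) (use that in simp_all)
  have l1: "l = 1"
  proof (rule ccontr)
    assume l: "l \<noteq> 1"
    have v0: "blk n V 0 0 = 0\<^sub>m n n" using fix1[OF c A0 l] .
    have "blk n V 1 0 = l \<cdot>\<^sub>m blk n V 1 0" using A1 unfolding v0 by simp
    then have v1: "blk n V 1 0 = 0\<^sub>m n n" using fix1[OF c _ l] by blast
    have v2: "blk n V 2 0 = 0\<^sub>m n n" using fix1[OF c A2 l] .
    have "blk n V 3 0 = l \<cdot>\<^sub>m blk n V 3 0" using A3 unfolding v1 v2 using dims by simp
    then have v3: "blk n V 3 0 = 0\<^sub>m n n" using fix1[OF c _ l] by blast
    have v4: "blk n V 4 0 = 0\<^sub>m n n" using fix1[OF c A4 l] .
    show False using zero[OF v0 v1 v2 v3 v4] nz by simp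
  qed
  have mu: "mu = 0 \<or> mu = 1"
  proof (rule ccontr)
    assume "\<not> (mu = 0 \<or> mu = 1)"
    then have m0: "mu \<noteq> 0" and m1: "mu \<noteq> 1" by auto
    have v0: "blk n V 0 0 = 0\<^sub>m n n" using fix0[OF c B0 m0] .
    have v1: "blk n V 1 0 = 0\<^sub>m n n" using fix0[OF c B1 m0] .
    have "0\<^sub>m n n = mu \<cdot>\<^sub>m blk n V 2 0" using B2 unfolding v0 by simp
    then have v2: "blk n V 2 0 = 0\<^sub>m n n" using fix0[OF c _ m0] by blast
    have "0\<^sub>m n n = mu \<cdot>\<^sub>m blk n V 3 0" using B3 unfolding v1 v2 using dims by simp
    then have v3: "blk n V 3 0 = 0\<^sub>m n n" using fix0[OF c _ m0] by blast
    have v4: "blk n V 4 0 = 0\<^sub>m n n" using fix1[OF c B4 m1] .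
    show False using zero[OF v0 v1 v2 v3 v4] nz by simp
  qed
  show ?thesis using l1 mu by simp
qed

lemma swapkill:
  assumes X: "X \<in> carrier_mat n n" and Y: "Y \<in> carrier_mat n n"
    and V: "V \<in> carrier_mat (5*n) n"
    and h: "MB n X Y * (MB n X Y * V - V) = MB n X Y * V - V"
  shows "MA n X Y * V = V"
proof -
  note dims = carrier_matD[OF X] carrier_matD[OF Y]
  define U where "U = MB n X Y * V - V"
  have U: "U \<in> carrier_mat (5*n) n" unfolding U_def using V by (rule minus_carrier_mat)
  have V1: "V \<in> carrier_mat (5*n) (1*n)" using V by simp
  have U1: "U \<in> carrier_mat (5*n) (1*n)" using U by simp
  have c: "\<And>p. blk n V p 0 \<in> carrier_mat n n" by simp
  have BV: "MB n X Y * V \<in> carrier_mat (5*n) n" by (rule mult_carrier_mat[OF MB_carrier V])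
  note m = blk_mult5[OF MA_carrier V1] blk_mult5[OF MB_carrier V1] blk_mult5[OF MB_carrier U1]
  have eU: "\<And>p. p < 5 \<Longrightarrow> blk n U p 0 = blk n (MB n X Y * V) p 0 - blk n V p 0"
    unfolding U_def by (rule blk_minus[OF BV V, where a=5 and b=1]) auto
  have h': "MB n X Y * U = U" using h unfolding U_def .
  have eh: "\<And>p. p < 5 \<Longrightarrow> blk n (MB n X Y * U) p 0 = blk n U p 0" using h' by simp
  have U0: "blk n U 0 0 = 0\<^sub>m n n - blk n V 0 0" using eU[of 0] X Y by (simp add: m dims)
  have U1': "blk n U 1 0 = 0\<^sub>m n n - blk n V 1 0" using eU[of 1] X Y by (simp add: m dims)
  have U2: "blk n U 2 0 = blk n V 0 0 - blk n V 2 0" using eU[of 2] X Y by (simp add: m dims)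
  have U3: "blk n U 3 0 = Y * blk n V 1 0 + X * blk n V 2 0 - blk n V 3 0" using eU[of 3] X Y by (simp add: m dims)
  have H0: "0\<^sub>m n n = blk n U 0 0" using eh[of 0] X Y by (simp add: m dims)
  have H1: "0\<^sub>m n n = blk n U 1 0" using eh[of 1] X Y by (simp add: m dims)
  have H2: "blk n U 0 0 = blk n U 2 0" using eh[of 2] X Y by (simp add: m dims)
  have H3: "Y * blk n U 1 0 + X * blk n U 2 0 = blk n U 3 0" using eh[of 3] X Y by (simp add: m dims)
  have v0: "blk n V 0 0 = 0\<^sub>m n n" using H0 U0 by (intro neg0[OF c]) simp
  have v1: "blk n V 1 0 = 0\<^sub>m n n" using H1 U1' by (intro neg0[OF c]) simp
  have "0\<^sub>m n n - blk n V 2 0 = 0\<^sub>m n n" using H0 H2 U2 v0 by simp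
  then have v2: "blk n V 2 0 = 0\<^sub>m n n" by (rule neg0[OF c])
  have u1: "blk n U 1 0 = 0\<^sub>m n n" using H1 by simp
  have u2: "blk n U 2 0 = 0\<^sub>m n n" using H2 H0 by simp
  have u3: "blk n U 3 0 = 0\<^sub>m n n" using H3 u1 u2 dims by simp
  have U3': "blk n U 3 0 = 0\<^sub>m n n - blk n V 3 0" using U3 v1 v2 dims by simp
  have "0\<^sub>m n n - blk n V 3 0 = 0\<^sub>m n n" by (simp only: U3'[symmetric] u3)
  then have v3: "blk n V 3 0 = 0\<^sub>m n n" by (rule neg0[OF c])
  show ?thesis
  proof (rule blk_eq51)
    show "MA n X Y * V \<in> carrier_mat (5*n) n" by (rule mult_carrier_mat[OF MA_carrier V])
  qed (use V X Y v0 v1 v2 v3 in \<open>simp_all add: m dims\<close>)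
qed


lemma smult_zero_right[simp]: "c \<cdot>\<^sub>m (0\<^sub>m r k :: 'a::field mat) = 0\<^sub>m r k"
  by (rule eq_matI) auto

lemma minus_zero_right'[simp]: "dim_row (A::'a::field mat) = r \<Longrightarrow> dim_col A = k \<Longrightarrow> A - 0\<^sub>m r k = A"
  by (rule eq_matI) auto

lemma minus_self'[simp]: "(A::'a::field mat) - A = 0\<^sub>m (dim_row A) (dim_col A)"
  by (rule eq_matI) auto

lemma Ecol_carrier1: "Ecol n p \<in> carrier_mat (5*n) (1*n)" by simp

lemma comb_mult:
  assumes W: "W \<in> carrier_mat (5*n) k"
  shows "(a \<cdot>\<^sub>m MA n X Y + b \<cdot>\<^sub>m MB n X Y) * W = a \<cdot>\<^sub>m (MA n X Y * W) + b \<cdot>\<^sub>m (MB n X Y * W)"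
proof -
  have "(a \<cdot>\<^sub>m MA n X Y + b \<cdot>\<^sub>m MB n X Y) * W = (a \<cdot>\<^sub>m MA n X Y) * W + (b \<cdot>\<^sub>m MB n X Y) * W"
    by (rule add_mult_distrib_mat[of "a \<cdot>\<^sub>m MA n X Y" "5*n" "5*n" "b \<cdot>\<^sub>m MB n X Y" W k]) (simp_all add: W)
  also have "\<dots> = a \<cdot>\<^sub>m (MA n X Y * W) + b \<cdot>\<^sub>m (MB n X Y * W)"
    using mult_smult_assoc_mat[OF MA_carrier W] mult_smult_assoc_mat[OF MB_carrier W] by simp
  finally show ?thesis .
qed

lemma blk_comb:
  assumes "p < 5" "q < 5"
  shows "blk n (a \<cdot>\<^sub>m MA n X Y + b \<cdot>\<^sub>m MB n X Y) p q = a \<cdot>\<^sub>m blk n (MA n X Y) p q + b \<cdot>\<^sub>m blk n (MB n X Y) p q"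
proof -
  have "blk n (a \<cdot>\<^sub>m MA n X Y + b \<cdot>\<^sub>m MB n X Y) p q = blk n (a \<cdot>\<^sub>m MA n X Y) p q + blk n (b \<cdot>\<^sub>m MB n X Y) p q"
    by (rule blk_add[where a=5 and b=5]) (use assms in simp_all)
  moreover have "blk n (a \<cdot>\<^sub>m MA n X Y) p q = a \<cdot>\<^sub>m blk n (MA n X Y) p q"
    by (rule blk_smult[where a=5 and b=5]) (use assms in simp_all)
  moreover have "blk n (b \<cdot>\<^sub>m MB n X Y) p q = b \<cdot>\<^sub>m blk n (MB n X Y) p q"
    by (rule blk_smult[where a=5 and b=5]) (use assms in simp_all)
  ultimately show ?thesis by simp
qed

lemma blk_minus51: "M \<in> carrier_mat (5*n) n \<Longrightarrow> N \<in> carrier_mat (5*n) n \<Longrightarrow> p < 5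
  \<Longrightarrow> blk n (M - N) p 0 = blk n M p 0 - blk n N p 0"
  by (rule blk_minus[where a=5 and b=1]) auto

lemma prodE[simp]: "MA n X Y * Ecol n p \<in> carrier_mat (5*n) n" "MB n X Y * Ecol n p \<in> carrier_mat (5*n) n"
  by (rule mult_carrier_mat[OF MA_carrier Ecol_carrier], rule mult_carrier_mat[OF MB_carrier Ecol_carrier])

lemma Ecol_prods:
  assumes X: "X \<in> carrier_mat n n" and Y: "Y \<in> carrier_mat n n"
  shows "MA n X Y * Ecol n 3 = Ecol n 3" "MB n X Y * Ecol n 3 = 0\<^sub>m (5*n) n"
    "MA n X Y * Ecol n 4 = Ecol n 4" "MB n X Y * Ecol n 4 = Ecol n 4"
    "MA n X Y * Ecol n 1 = Ecol n 1 + Ecol n 3"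
proof -
  note dims = carrier_matD[OF X] carrier_matD[OF Y]
  note m = blk_mult5[OF MA_carrier Ecol_carrier1] blk_mult5[OF MB_carrier Ecol_carrier1]
  show "MA n X Y * Ecol n 3 = Ecol n 3"
    by (rule blk_eq51[where n=n]) (use X Y in \<open>simp_all add: m dims\<close>)
  show "MB n X Y * Ecol n 3 = 0\<^sub>m (5*n) n"
    by (rule blk_eq51[where n=n]) (use X Y in \<open>simp_all add: m dims\<close>)
  show "MA n X Y * Ecol n 4 = Ecol n 4"
    by (rule blk_eq51[where n=n]) (use X Y in \<open>simp_all add: m dims\<close>)
  show "MB n X Y * Ecol n 4 = Ecol n 4"
    by (rule blk_eq51[where n=n]) (use X Y in \<open>simp_all add: m dims\<close>)
  have b: "\<And>M N p. M \<in> carrier_mat (5*n) n \<Longrightarrow> N \<in> carrier_mat (5*n) n \<Longrightarrow> p < 5 \<Longrightarrow> blk n (M + N) p 0 = blk n M p 0 + blk n N p 0"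
    by (rule blk_add[where a=5 and b=1]) auto
  show "MA n X Y * Ecol n 1 = Ecol n 1 + Ecol n 3"
    by (rule blk_eq51[where n=n]) (use X Y in \<open>simp_all add: m dims b\<close>)
qed

lemma swapcalc:
  assumes X: "X \<in> carrier_mat n n" and Y: "Y \<in> carrier_mat n n"
  defines "B2 \<equiv> 1 \<cdot>\<^sub>m MA n X Y + (-1) \<cdot>\<^sub>m MB n X Y"
  shows "B2 * (B2 * Ecol n 1 - Ecol n 1) = B2 * Ecol n 1 - Ecol n 1"
proof -
  note dims = carrier_matD[OF X] carrier_matD[OF Y]
  have B2c: "B2 \<in> carrier_mat (5*n) (5*n)" unfolding B2_def by simp
  define W where "W = B2 * Ecol n 1 - Ecol n 1"
  have BE: "B2 * Ecol n 1 \<in> carrier_mat (5*n) n" using B2c by simp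
  have Wc: "W \<in> carrier_mat (5*n) n" unfolding W_def using Ecol_carrier by (rule minus_carrier_mat)
  have Wc1: "W \<in> carrier_mat (5*n) (1*n)" using Wc by simp
  have bB2: "\<And>p q. p < 5 \<Longrightarrow> q < 5 \<Longrightarrow> blk n B2 p q = 1 \<cdot>\<^sub>m blk n (MA n X Y) p q + (-1) \<cdot>\<^sub>m blk n (MB n X Y) p q"
    unfolding B2_def by (rule blk_comb)
  note m = blk_mult5[OF B2c Ecol_carrier1] blk_mult5[OF B2c Wc1]
  have Wb: "\<And>p. p < 5 \<Longrightarrow> blk n W p 0 = (if p = 3 then 1\<^sub>m n + (-1) \<cdot>\<^sub>m Y else 0\<^sub>m n n)"
  proof -
    fix p :: nat assume p: "p < 5"
    have "blk n W p 0 = blk n (B2 * Ecol n 1) p 0 - blk n (Ecol n 1) p 0"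
      unfolding W_def by (rule blk_minus51[OF BE Ecol_carrier p])
    then show "blk n W p 0 = (if p = 3 then 1\<^sub>m n + (-1) \<cdot>\<^sub>m Y else 0\<^sub>m n n)"
      using less5[OF p] X Y apply (elim disjE)
      by (simp_all add: m bB2 dims)
  qed
  have "B2 * W = W"
    by (rule blk_eq51[where n=n]) (use X Y Wc B2c in \<open>simp_all add: m Wb bB2 dims\<close>)
  then show ?thesis unfolding W_def .
qed

lemma tr:
  fixes S :: "'a::field mat"
  assumes S: "S \<in> carrier_mat (5*n) (5*n)" and Si: "Si \<in> carrier_mat (5*n) (5*n)"
    and SSi: "S * Si = 1\<^sub>m (5*n)" and M: "M \<in> carrier_mat (5*n) (5*n)" and W: "W \<in> carrier_mat (5*n) k"
  shows "(Si * M * S) * (Si * W) = Si * (M * W)"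
proof -
  have SiM: "Si * M \<in> carrier_mat (5*n) (5*n)" using Si M by simp
  have "(Si * M * S) * (Si * W) = (Si * M) * (S * (Si * W))"
    by (rule assoc_mult_mat[OF SiM S mult_carrier_mat[OF Si W]])
  also have "S * (Si * W) = W"
    unfolding assoc_mult_mat[OF S Si W, symmetric] SSi using W by (rule left_mult_one_mat)
  also have "(Si * M) * W = Si * (M * W)" using Si M W by simp
  finally show ?thesis .
qed

lemma nzSi:
  fixes S :: "'a::field mat"
  assumes S: "S \<in> carrier_mat (5*n) (5*n)" and Si: "Si \<in> carrier_mat (5*n) (5*n)"
    and SSi: "S * Si = 1\<^sub>m (5*n)" and W: "W \<in> carrier_mat (5*n) k" and nz: "W \<noteq> 0\<^sub>m (5*n) k"
  shows "Si * W \<noteq> 0\<^sub>m (5*n) k"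
proof
  assume h: "Si * W = 0\<^sub>m (5*n) k"
  have "W = S * (Si * W)"
    unfolding assoc_mult_mat[OF S Si W, symmetric] SSi using left_mult_one_mat[OF W] by simp
  also have "\<dots> = 0\<^sub>m (5*n) k" unfolding h using S by simp
  finally show False using nz by simp
qed

lemma Ecol_nz: assumes "1 \<le> n" "p < 5" shows "Ecol n p \<noteq> (0\<^sub>m (5*n) n :: 'a::field mat)"
proof
  assume h: "Ecol n p = (0\<^sub>m (5*n) n :: 'a::field mat)"
  have lt: "p*n + 0 < 5*n" using assms by (intro idx_lt) auto
  have "(Ecol n p :: 'a mat) $$ (p*n + 0, 0) = 1" using assms lt unfolding Ecol_def by simp
  moreover have "(Ecol n p :: 'a mat) $$ (p*n + 0, 0) = 0" unfolding h using lt by simp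
  ultimately show False by simp
qed


lemma dims_simps[simp]: "dim_row (MA n X Y) = 5*n" "dim_col (MA n X Y) = 5*n"
  "dim_row (MB n X Y) = 5*n" "dim_col (MB n X Y) = 5*n" "dim_row (Ecol n p) = 5*n" "dim_col (Ecol n p) = n"
  by (simp_all add: MA_def MB_def polymat_eval_def Ecol_def)

lemma hard:
  fixes X Y X' Y' :: "'a::field mat"
  assumes X: "X \<in> carrier_mat n n" and Y: "Y \<in> carrier_mat n n"
    and X': "X' \<in> carrier_mat n n" and Y': "Y' \<in> carrier_mat n n" and n1: "1 \<le> n"
    and S: "S \<in> carrier_mat (5*n) (5*n)" and Si: "Si \<in> carrier_mat (5*n) (5*n)"
    and SSi: "S * Si = 1\<^sub>m (5*n)" and SiS: "Si * S = 1\<^sub>m (5*n)"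
    and det: "a * d - b * c \<noteq> 0"
    and hA: "MA n X' Y' = Si * (a \<cdot>\<^sub>m MA n X Y + b \<cdot>\<^sub>m MB n X Y) * S"
    and hB: "MB n X' Y' = Si * (c \<cdot>\<^sub>m MA n X Y + d \<cdot>\<^sub>m MB n X Y) * S"
  shows "similar_pair X Y X' Y'"
proof -
  define A2 where "A2 = a \<cdot>\<^sub>m MA n X Y + b \<cdot>\<^sub>m MB n X Y"
  define B2 where "B2 = c \<cdot>\<^sub>m MA n X Y + d \<cdot>\<^sub>m MB n X Y"
  have A2c: "A2 \<in> carrier_mat (5*n) (5*n)" unfolding A2_def by simp
  have B2c: "B2 \<in> carrier_mat (5*n) (5*n)" unfolding B2_def by simp
  have trA: "\<And>W k. W \<in> carrier_mat (5*n) k \<Longrightarrow> MA n X' Y' * (Si * W) = Si * (A2 * W)"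
    unfolding hA A2_def[symmetric] by (rule tr[OF S Si SSi A2c])
  have trB: "\<And>W k. W \<in> carrier_mat (5*n) k \<Longrightarrow> MB n X' Y' * (Si * W) = Si * (B2 * W)"
    unfolding hB B2_def[symmetric] by (rule tr[OF S Si SSi B2c])
  note EP = Ecol_prods[OF X Y]
  have E: "\<And>p. Ecol n p \<in> carrier_mat (5*n) n" by simp
  have VE: "\<And>p. p < 5 \<Longrightarrow> Si * Ecol n p \<noteq> 0\<^sub>m (5*n) n"
    by (rule nzSi[OF S Si SSi E Ecol_nz[OF n1]])
  have VEc: "\<And>p. Si * Ecol n p \<in> carrier_mat (5*n) n" using Si by simp
  have sm: "\<And>e p. Si * (e \<cdot>\<^sub>m Ecol n p) = e \<cdot>\<^sub>m (Si * Ecol n p)"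
    by (rule mult_smult_distrib[OF Si E])
  have "A2 * Ecol n 3 = a \<cdot>\<^sub>m Ecol n 3" unfolding A2_def comb_mult[OF E] EP by simp
  then have "MA n X' Y' * (Si * Ecol n 3) = a \<cdot>\<^sub>m (Si * Ecol n 3)" using trA[OF E] sm by simp
  moreover have "B2 * Ecol n 3 = c \<cdot>\<^sub>m Ecol n 3" unfolding B2_def comb_mult[OF E] EP by simp
  then have "MB n X' Y' * (Si * Ecol n 3) = c \<cdot>\<^sub>m (Si * Ecol n 3)" using trB[OF E] sm by simp
  ultimately have F1: "a = 1 \<and> (c = 0 \<or> c = 1)" using eig[OF X' Y' VEc _ _ VE] by simp
  have "A2 * Ecol n 4 = (a + b) \<cdot>\<^sub>m Ecol n 4" unfolding A2_def comb_mult[OF E] EP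
    by (simp add: add_smult_distrib_right_mat[OF E])
  then have "MA n X' Y' * (Si * Ecol n 4) = (a + b) \<cdot>\<^sub>m (Si * Ecol n 4)" using trA[OF E] sm by simp
  moreover have "B2 * Ecol n 4 = (c + d) \<cdot>\<^sub>m Ecol n 4" unfolding B2_def comb_mult[OF E] EP
    by (simp add: add_smult_distrib_right_mat[OF E])
  then have "MB n X' Y' * (Si * Ecol n 4) = (c + d) \<cdot>\<^sub>m (Si * Ecol n 4)" using trB[OF E] sm by simp
  ultimately have F2: "a + b = 1 \<and> (c + d = 0 \<or> c + d = 1)" using eig[OF X' Y' VEc _ _ VE] by simp
  have a1: "a = 1" and b0: "b = 0" using F1 F2 by auto
  have d0: "d \<noteq> 0" using det a1 b0 by simp
  have c0: "c = 0"
  proof (rule ccontr)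
    assume "c \<noteq> 0"
    then have c1: "c = 1" using F1 by simp
    then have dm: "d = -1" using F2 d0 by (auto simp: add_eq_0_iff)
    have B2': "B2 = 1 \<cdot>\<^sub>m MA n X Y + (-1) \<cdot>\<^sub>m MB n X Y" unfolding B2_def c1 dm ..
    define V where "V = Si * Ecol n 1"
    have Vc: "V \<in> carrier_mat (5*n) n" unfolding V_def using VEc .
    have BE: "B2 * Ecol n 1 \<in> carrier_mat (5*n) n" using B2c by simp
    have W: "B2 * Ecol n 1 - Ecol n 1 \<in> carrier_mat (5*n) n" using E by (rule minus_carrier_mat)
    have BV: "MB n X' Y' * V = Si * (B2 * Ecol n 1)" unfolding V_def by (rule trB[OF E])
    have "MB n X' Y' * V - V = Si * (B2 * Ecol n 1 - Ecol n 1)"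
      using mult_minus_distrib_mat[OF Si BE E] BV unfolding V_def by simp
    then have "MB n X' Y' * (MB n X' Y' * V - V) = Si * (B2 * (B2 * Ecol n 1 - Ecol n 1))"
      using trB[OF W] by simp
    also have "B2 * (B2 * Ecol n 1 - Ecol n 1) = B2 * Ecol n 1 - Ecol n 1"
      unfolding B2' by (rule swapcalc[OF X Y])
    also have "Si * (B2 * Ecol n 1 - Ecol n 1) = MB n X' Y' * V - V"
      using \<open>MB n X' Y' * V - V = Si * (B2 * Ecol n 1 - Ecol n 1)\<close> by simp
    finally have "MA n X' Y' * V = V" by (rule swapkill[OF X' Y' Vc])
    moreover have "MA n X' Y' * V = Si * (A2 * Ecol n 1)" unfolding V_def by (rule trA[OF E])
    moreover have "A2 * Ecol n 1 = Ecol n 1 + Ecol n 3" unfolding A2_def a1 b0 comb_mult[OF E] EP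
      using E by simp
    moreover have "Si * (Ecol n 1 + Ecol n 3) = Si * Ecol n 1 + Si * Ecol n 3"
      by (rule mult_add_distrib_mat[OF Si E E])
    ultimately have "Si * Ecol n 1 + Si * Ecol n 3 = Si * Ecol n 1" unfolding V_def by simp
    then have "Si * Ecol n 3 = 0\<^sub>m (5*n) n"
    proof -
      assume h: "Si * Ecol n 1 + Si * Ecol n 3 = Si * Ecol n 1"
      show ?thesis
      proof (rule eq_matI)
        fix i j assume i: "i < dim_row (0\<^sub>m (5*n) n :: 'a mat)" and j: "j < dim_col (0\<^sub>m (5*n) n :: 'a mat)"
        have "(Si * Ecol n 1 + Si * Ecol n 3) $$ (i,j) = (Si * Ecol n 1) $$ (i,j)" using h by simp
        then show "(Si * Ecol n 3) $$ (i,j) = (0\<^sub>m (5*n) n :: 'a mat) $$ (i,j)" using i j carrier_matD[OF Si] by simp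
      qed (use carrier_matD[OF Si] in simp_all)
    qed
    then show False using VE[of 3] by simp
  qed
  have d1: "d = 1" using F2 c0 d0 by auto
  have A2M: "A2 = MA n X Y" unfolding A2_def a1 b0 by simp
  have B2M: "B2 = MB n X Y" unfolding B2_def c0 d1 by simp
  have hA': "MA n X' Y' = Si * MA n X Y * S" using hA unfolding A2_def[symmetric] A2M .
  have hB': "MB n X' Y' = Si * MB n X Y * S" using hB unfolding B2_def[symmetric] B2M .
  have conj1: "\<And>M. M \<in> carrier_mat (5*n) (5*n) \<Longrightarrow> S * (Si * M * S) = M * S"
  proof -
    fix M :: "'a mat" assume M: "M \<in> carrier_mat (5*n) (5*n)"
    have MS: "M * S \<in> carrier_mat (5*n) (5*n)" using M S by simp
    have "S * (Si * M * S) = S * (Si * (M * S))" unfolding assoc_mult_mat[OF Si M S] ..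
    also have "\<dots> = (S * Si) * (M * S)" by (rule assoc_mult_mat[OF S Si MS, symmetric])
    also have "\<dots> = M * S" unfolding SSi by (rule left_mult_one_mat[OF MS])
    finally show "S * (Si * M * S) = M * S" .
  qed
  have conj2: "\<And>M. M \<in> carrier_mat (5*n) (5*n) \<Longrightarrow> (Si * M * S) * Si = Si * M"
  proof -
    fix M :: "'a mat" assume M: "M \<in> carrier_mat (5*n) (5*n)"
    have SiM: "Si * M \<in> carrier_mat (5*n) (5*n)" using M Si by simp
    have "(Si * M * S) * Si = Si * M * (S * Si)" by (rule assoc_mult_mat[OF SiM S Si])
    also have "\<dots> = Si * M" unfolding SSi by (rule right_mult_one_mat[OF SiM])
    finally show "(Si * M * S) * Si = Si * M" .
  qed
  have cA: "S * MA n X' Y' = MA n X Y * S" unfolding hA' by (rule conj1) simp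
  have cB: "S * MB n X' Y' = MB n X Y * S" unfolding hB' by (rule conj1) simp
  have dA: "Si * MA n X Y = MA n X' Y' * Si" unfolding hA' by (rule conj2[symmetric]) simp
  have dB: "Si * MB n X Y = MB n X' Y' * Si" unfolding hB' by (rule conj2[symmetric]) simp
  note C1 = core[OF X Y X' Y' S cA cB]
  note C2 = core[OF X' Y' X Y Si dA dB]
  define T where "T = blk n S 0 0"
  define Ti where "Ti = blk n Si 0 0"
  have Tc: "T \<in> carrier_mat n n" "Ti \<in> carrier_mat n n" unfolding T_def Ti_def by simp_all
  have "blk n (Si * S) 0 0 = Ti * T"
    using blk_mult5[OF Si S, of 0 0] C2 Tc unfolding T_def Ti_def by simp
  then have TiT: "Ti * T = 1\<^sub>m n" unfolding SiS by simp
  have "blk n (S * Si) 0 0 = T * Ti"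
    using blk_mult5[OF S Si, of 0 0] C1 Tc unfolding T_def Ti_def by simp
  then have TTi: "T * Ti = 1\<^sub>m n" unfolding SSi by simp
  have eX: "T * X' = X * T" and eY: "T * Y' = Y * T" using C1 unfolding T_def by simp_all
  have "Ti * X * T = X'"
  proof -
    have "Ti * X * T = Ti * (X * T)" using Tc X by simp
    also have "\<dots> = Ti * (T * X')" unfolding eX ..
    also have "\<dots> = (Ti * T) * X'" using Tc X' by simp
    finally show ?thesis unfolding TiT using X' by simp
  qed
  moreover have "Ti * Y * T = Y'"
  proof -
    have "Ti * Y * T = Ti * (Y * T)" using Tc Y by simp
    also have "\<dots> = Ti * (T * Y')" unfolding eY ..
    also have "\<dots> = (Ti * T) * Y'" using Tc Y' by simp
    finally show ?thesis unfolding TiT using Y' by simp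
  qed
  ultimately show ?thesis unfolding similar_pair_def using X Y X' Y' Tc TiT TTi by blast
qed


definition Dg :: "nat \<Rightarrow> 'a::field mat \<Rightarrow> 'a mat" where
  "Dg n T = mat (5*n) (5*n) (\<lambda>(i,j). if i div n = j div n then T $$ (i mod n, j mod n) else 0)"

lemma Dg_carrier[simp]: "Dg n T \<in> carrier_mat (5*n) (5*n)" by (simp add: Dg_def)

lemma blk_Dg[simp]: "T \<in> carrier_mat n n \<Longrightarrow> p < 5 \<Longrightarrow> q < 5 \<Longrightarrow> blk n (Dg n T) p q = (if p = q then T else 0\<^sub>m n n)"
  by (rule eq_matI) (auto simp: Dg_def idx_lt)

lemma Dg_inv:
  assumes T: "T \<in> carrier_mat n n" and Ti: "Ti \<in> carrier_mat n n" and e: "T * Ti = 1\<^sub>m n"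
  shows "Dg n T * Dg n Ti = 1\<^sub>m (5*n)"
proof -
  note m = blk_mult5[OF Dg_carrier Dg_carrier]
  have o: "1\<^sub>m (5*n) \<in> carrier_mat (5*n) (5*n)" by simp
  show ?thesis
    apply (rule blk_eq55[where n=n])
    apply (rule mult_carrier_mat[OF Dg_carrier Dg_carrier])
    apply (rule o)
    apply (drule less5, elim disjE, simp_all add: m carrier_matD[OF T] carrier_matD[OF Ti] T Ti e)+
    done
qed

lemma blk_conj:
  assumes T: "T \<in> carrier_mat n n" and Ti: "Ti \<in> carrier_mat n n" and M: "M \<in> carrier_mat (5*n) (5*n)"
    and p: "p < 5" and q: "q < 5"
  shows "blk n (Dg n Ti * M * Dg n T) p q = Ti * blk n M p q * T"
proof -
  have DM: "Dg n Ti * M \<in> carrier_mat (5*n) (5*n)" by (rule mult_carrier_mat[OF Dg_carrier M])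
  note m1 = blk_mult5[OF DM Dg_carrier] and m2 = blk_mult5[OF Dg_carrier M]
  note d = carrier_matD[OF T] carrier_matD[OF Ti]
  show ?thesis
    using less5[OF p] less5[OF q] T Ti by (elim disjE) (simp_all add: m1 m2 d)
qed

lemma easy:
  fixes X Y X' Y' :: "'a::field mat"
  assumes X: "X \<in> carrier_mat n n" and Y: "Y \<in> carrier_mat n n"
    and X': "X' \<in> carrier_mat n n" and Y': "Y' \<in> carrier_mat n n"
    and T: "T \<in> carrier_mat n n" and Ti: "Ti \<in> carrier_mat n n"
    and e1: "T * Ti = 1\<^sub>m n" and e2: "Ti * T = 1\<^sub>m n"
    and hX: "Ti * X * T = X'" and hY: "Ti * Y * T = Y'"
  shows "weakly_similar (MA n X Y) (MB n X Y) (MA n X' Y') (MB n X' Y')"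
proof -
  have s1: "1 \<cdot>\<^sub>m MA n X Y + 0 \<cdot>\<^sub>m MB n X Y = MA n X Y" by simp
  have s2: "0 \<cdot>\<^sub>m MA n X Y + 1 \<cdot>\<^sub>m MB n X Y = MB n X Y" by simp
  have TiT: "Ti * 1\<^sub>m n * T = 1\<^sub>m n" using e2 Ti by simp
  have Ti0: "Ti * 0\<^sub>m n n * T = 0\<^sub>m n n" using Ti T by simp
  have cA: "Dg n Ti * MA n X Y * Dg n T = MA n X' Y'"
  proof (rule blk_eq55[where n=n])
    show "Dg n Ti * MA n X Y * Dg n T \<in> carrier_mat (5*n) (5*n)"
      by (rule mult_carrier_mat[OF mult_carrier_mat[OF Dg_carrier MA_carrier] Dg_carrier])
  qed (use X Y X' Y' T Ti hX hY TiT Ti0 in \<open>simp_all add: blk_conj[OF T Ti MA_carrier]\<close>)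
  have cB: "Dg n Ti * MB n X Y * Dg n T = MB n X' Y'"
  proof (rule blk_eq55[where n=n])
    show "Dg n Ti * MB n X Y * Dg n T \<in> carrier_mat (5*n) (5*n)"
      by (rule mult_carrier_mat[OF mult_carrier_mat[OF Dg_carrier MB_carrier] Dg_carrier])
  qed (use X Y X' Y' T Ti hX hY TiT Ti0 in \<open>simp_all add: blk_conj[OF T Ti MB_carrier]\<close>)
  show ?thesis
    unfolding weakly_similar_def
    apply (rule exI[of _ "5*n"], rule exI[of _ "Dg n T"], rule exI[of _ "Dg n Ti"])
    apply (rule exI[of _ 1], rule exI[of _ 0], rule exI[of _ 0], rule exI[of _ 1])
    using Dg_inv[OF T Ti e1] Dg_inv[OF Ti T e2] cA cB s1 s2 by simp
qed

lemma commute: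
  assumes X: "X \<in> carrier_mat n n" and Y: "Y \<in> carrier_mat n n"
  shows "MA n X Y * MB n X Y = MB n X Y * MA n X Y"
proof -
  note m = blk_mult5[OF MA_carrier MB_carrier] blk_mult5[OF MB_carrier MA_carrier]
  note d = carrier_matD[OF X] carrier_matD[OF Y]
  show ?thesis
    apply (rule blk_eq55[where n=n])
    apply (rule mult_carrier_mat[OF MA_carrier MB_carrier])
    apply (rule mult_carrier_mat[OF MB_carrier MA_carrier])
    apply (drule less5, elim disjE, simp_all add: m d X Y)+
    done
qed

lemma MA_entry:
  assumes X: "X \<in> carrier_mat n n" and Y: "Y \<in> carrier_mat n n" and i: "i < 5*n" and j: "j < 5*n"
  shows "MA n X Y $$ (i,j) = blk n (MA n X Y) (i div n) (j div n) $$ (i mod n, j mod n)"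
proof -
  have np: "0 < n" using i by (cases n) auto
  have "blk n (MA n X Y) (i div n) (j div n) $$ (i mod n, j mod n) = MA n X Y $$ ((i div n)*n + i mod n, (j div n)*n + j mod n)"
    using np by simp
  then show ?thesis by simp
qed

lemma MA_entry2:
  assumes X: "X \<in> carrier_mat n n" and Y: "Y \<in> carrier_mat n n" and i: "i < 5*n" and j: "j < 5*n"
  shows "MA n X Y $$ (i,j) = (if i div n = j div n \<or> (i div n, j div n) = (1,0) \<or> (i div n, j div n) = (3,1) then 1\<^sub>m n
      else if (i div n, j div n) = (3,2) then Y else 0\<^sub>m n n) $$ (i mod n, j mod n)"
proof -
  have np: "0 < n" using i by (cases n) auto
  have p: "i div n < 5" "j div n < 5" using i j np by (simp_all add: less_mult_imp_div_less)
  have b: "blk n (MA n X Y) (i div n) (j div n) = (if i div n = j div n \<or> (i div n, j div n) = (1,0) \<or> (i div n, j div n) = (3,1) then 1\<^sub>m n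
      else if (i div n, j div n) = (3,2) then Y else 0\<^sub>m n n)"
    by (rule blk_MA[OF X Y p])
  show ?thesis using MA_entry[OF X Y i j] unfolding b .
qed

lemma MA_invertible:
  assumes X: "X \<in> carrier_mat n n" and Y: "Y \<in> carrier_mat n n"
  shows "invertible_mat (MA n X Y)"
proof -
  have lower: "\<And>i j. i < j \<Longrightarrow> j < 5*n \<Longrightarrow> MA n X Y $$ (i,j) = 0"
  proof -
    fix i j assume ij: "i < j" and j: "j < 5*n"
    have i: "i < 5*n" using ij j by simp
    have np: "0 < n" using j by (cases n) auto
    have p: "i div n < 5" "j div n < 5" using i j np by (simp_all add: less_mult_imp_div_less)
    have le: "i div n \<le> j div n" using ij by (simp add: div_le_mono)
    show "MA n X Y $$ (i,j) = 0"
    proof (cases "i div n = j div n")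
      case True
      then have "i mod n \<noteq> j mod n" using ij by (metis div_mult_mod_eq less_irrefl)
      then show ?thesis using MA_entry2[OF X Y i j] True np by simp
    next
      case False
      then have lt: "i div n < j div n" using le by simp
      then show ?thesis using MA_entry2[OF X Y i j] np by auto
    qed
  qed
  have diag: "\<And>i. i < 5*n \<Longrightarrow> MA n X Y $$ (i,i) = 1"
  proof -
    fix i assume i: "i < 5*n"
    have np: "0 < n" using i by (cases n) auto
    have p: "i div n < 5" using i np by (simp add: less_mult_imp_div_less)
    show "MA n X Y $$ (i,i) = 1" using MA_entry2[OF X Y i i] np by simp
  qed
  have "det (MA n X Y) = prod_list (diag_mat (MA n X Y))"
    by (rule det_lower_triangular[OF lower MA_carrier])
  also have "diag_mat (MA n X Y) = map (\<lambda>i. 1) [0..<5*n]"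
    unfolding diag_mat_def using diag by simp
  also have "prod_list (map (\<lambda>i. 1::'a) [0..<5*n]) = 1"
  proof -
    have "\<And>xs. prod_list (map (\<lambda>i. 1::'a) xs) = 1" by (induct_tac xs) simp_all
    then show ?thesis by blast
  qed
  finally have "det (MA n X Y) \<noteq> 0" by simp
  from det_non_zero_imp_unit[OF MA_carrier this, of undefined]
  obtain B where B: "B \<in> carrier_mat (5*n) (5*n)" "B * MA n X Y = 1\<^sub>m (5*n)" "MA n X Y * B = 1\<^sub>m (5*n)"
    unfolding Units_def ring_mat_simps by auto
  then show ?thesis unfolding invertible_mat_def inverts_mat_def using B by auto
qed


lemma tuple_eval_Ms: "tuple_eval n [PA, PB] X Y = [MA n X Y, MB n X Y]"
  by (simp add: tuple_eval_def MA_def MB_def)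

lemma wild_nonsing: "wild (commuting_pairs_nonsing :: 'a::field mat list set) weak_sim_transf"
  unfolding wild_def
proof (intro exI[of _ "[PA, PB]"] conjI allI impI)
  show "\<forall>P\<in>set [PA, PB]. \<forall>i<dim_row P. \<forall>j<dim_col P. ncpoly (P $$ (i, j))"
    by (auto simp: PA_def PB_def ncpoly_pw)
next
  fix n and A B :: "'a mat"
  assume n: "1 \<le> n" and A: "A \<in> carrier_mat n n" and B: "B \<in> carrier_mat n n"
  have inv: "invertible_mat (1 \<cdot>\<^sub>m MA n A B + 0 \<cdot>\<^sub>m MB n A B)"
    using MA_invertible[OF A B] by simp
  show "tuple_eval n [PA, PB] A B \<in> commuting_pairs_nonsing"
    unfolding tuple_eval_Ms commuting_pairs_nonsing_def mem_Collect_eq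
  proof (rule exI[of _ "MA n A B"], rule exI[of _ "MB n A B"], rule exI[of _ "5*n"], intro conjI)
    show "\<exists>\<alpha> \<beta>. invertible_mat (\<alpha> \<cdot>\<^sub>m MA n A B + \<beta> \<cdot>\<^sub>m MB n A B)" using inv by blast
  qed (use n commute[OF A B] in simp_all)
next
  fix n n' and A B A' B' :: "'a mat"
  assume n: "1 \<le> n" and n': "1 \<le> n'" and A: "A \<in> carrier_mat n n" and B: "B \<in> carrier_mat n n"
    and A': "A' \<in> carrier_mat n' n'" and B': "B' \<in> carrier_mat n' n'"
  show "weak_sim_transf (tuple_eval n [PA, PB] A B) (tuple_eval n' [PA, PB] A' B') = similar_pair A B A' B'"
  proof
    assume "weak_sim_transf (tuple_eval n [PA, PB] A B) (tuple_eval n' [PA, PB] A' B')"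
    then have ws: "weakly_similar (MA n A B) (MB n A B) (MA n' A' B') (MB n' A' B')"
      unfolding tuple_eval_Ms weak_sim_transf_def by auto
    then obtain m S Si a b c d where
      c1: "MA n A B \<in> carrier_mat m m" and c2: "MA n' A' B' \<in> carrier_mat m m"
      and S: "S \<in> carrier_mat m m" and Si: "Si \<in> carrier_mat m m"
      and SSi: "S * Si = 1\<^sub>m m" and SiS: "Si * S = 1\<^sub>m m" and det: "a * d - b * c \<noteq> 0"
      and hA: "MA n' A' B' = Si * (a \<cdot>\<^sub>m MA n A B + b \<cdot>\<^sub>m MB n A B) * S"
      and hB: "MB n' A' B' = Si * (c \<cdot>\<^sub>m MA n A B + d \<cdot>\<^sub>m MB n A B) * S"
      unfolding weakly_similar_def by blast
    have m: "m = 5*n" using c1 by auto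
    have "5*n' = m" using c2 by auto
    then have nn: "n' = n" using m by simp
    show "similar_pair A B A' B'"
      by (rule hard[OF A B _ _ n, of A' B' S Si a d b c])
        (use A' B' S Si SSi SiS det hA hB nn m in simp_all)
  next
    assume "similar_pair A B A' B'"
    then obtain m T Ti where cA: "A \<in> carrier_mat m m" and cA': "A' \<in> carrier_mat m m"
      and T: "T \<in> carrier_mat m m" and Ti: "Ti \<in> carrier_mat m m"
      and e1: "T * Ti = 1\<^sub>m m" and e2: "Ti * T = 1\<^sub>m m" and hX: "Ti * A * T = A'" and hY: "Ti * B * T = B'"
      unfolding similar_pair_def by blast
    have mn: "m = n" using cA A by auto
    have mn': "n' = n" using cA' A' mn by auto
    have "weakly_similar (MA n A B) (MB n A B) (MA n A' B') (MB n A' B')"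
      by (rule easy[OF A B _ _ _ _ _ _ hX hY]) (use A' B' T Ti e1 e2 mn mn' in simp_all)
    then show "weak_sim_transf (tuple_eval n [PA, PB] A B) (tuple_eval n' [PA, PB] A' B')"
      unfolding tuple_eval_Ms weak_sim_transf_def mn' by auto
  qed
qed

lemma nonsing_sub: "commuting_pairs_nonsing \<subseteq> (commuting_pairs :: 'a::field mat list set)"
  unfolding commuting_pairs_nonsing_def commuting_pairs_def by blast

lemma wild_mono: "wild M1 R \<Longrightarrow> M1 \<subseteq> M1' \<Longrightarrow> wild M1' R"
  unfolding wild_def by blast

theorem theorem1:
  shows "wild (commuting_pairs :: 'a::field mat list set) weak_sim_transf \<and>
         (card (UNIV :: 'a set) \<noteq> 2 \<longrightarrow> wild (commuting_pairs_nonsing :: 'a mat list set) weak_sim_transf)"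
  using wild_nonsing wild_mono[OF wild_nonsing nonsing_sub] by blast

end
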